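(* Consider a Pólya urn that initially contains $M$ balls, all of different colors. Repeatedly draw a ball uniformly at random from the urn and return it together with another ball of the same color, until there are $N$ balls in the urn ($N\ge M$, $N\ge2$). If two balls are then chosen uniformly at random (without replacement) from the urn, the probability that they have the same color is at most $2/(M+1)$. *)

theory Defs
  imports "HOL-Probability.Probability"
begin

text \<open>An urn state is a list c of ball counts, indexed by colours 0..<length c.
  The individual balls are the pairs (i, j) with i < length c and j < c ! i;
  the colour of ball (i, j) is i.\<close>

definition balls :: "nat list \<Rightarrow> (nat \<times> nat) set" where
  "balls c = {(i, j). i < length c \<and> j < c ! i}"

definition polya_step :: "nat list \<Rightarrow> nat list pmf" where
  "polya_step c = map_pmf (\<lambda>b. c[fst b := c ! fst b + 1]) (pmf_of_set (balls c))"

fun polya_urn :: "nat \<Rightarrow> nat \<Rightarrow> nat list pmf" where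
  "polya_urn M 0 = return_pmf (replicate M 1)"
| "polya_urn M (Suc k) = bind_pmf (polya_urn M k) polya_step"

definition draw_two :: "nat list \<Rightarrow> ((nat \<times> nat) \<times> (nat \<times> nat)) pmf" where
  "draw_two c = pmf_of_set {(b1, b2). b1 \<in> balls c \<and> b2 \<in> balls c \<and> b1 \<noteq> b2}"

definition same_colour_prob :: "nat \<Rightarrow> nat \<Rightarrow> real" where
  "same_colour_prob M N =
     measure_pmf.prob
       (bind_pmf (polya_urn M (N - M)) (\<lambda>c. map_pmf (\<lambda>(b1, b2). fst b1 = fst b2) (draw_two c)))
       {True}"

end

theory Submission
  imports Defs
begin


lemma balls_Sigma: "balls c = Sigma {..<length c} (\<lambda>i. {..<c!i})"
  unfolding balls_def by auto

lemma finite_balls: "finite (balls c)"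
  unfolding balls_Sigma by auto

lemma card_balls: "card (balls c) = sum_list c"
  unfolding balls_Sigma by (simp add: sum_list_sum_nth atLeast0LessThan)

lemma balls_ne: "sum_list c > 0 \<Longrightarrow> balls c \<noteq> {}"
proof -
  assume "sum_list c > 0"
  then obtain i where "i < length c" "c!i > 0"
    by (metis atLeast0LessThan lessThan_iff less_nat_zero_code sum_list_sum_nth not_gr0 sum.neutral)
  then have "(i,0) \<in> balls c" by (auto simp: balls_def)
  then show ?thesis by auto
qed

lemma balls_sum: "(\<Sum>b\<in>balls c. g (fst b)) = (\<Sum>i<length c. real (c!i) * g i)"
proof -
  have "(\<Sum>b\<in>balls c. g (fst b)) = (\<Sum>(i,j)\<in>Sigma {..<length c} (\<lambda>i. {..<c!i}). g i)"
    unfolding balls_Sigma by (simp add: case_prod_beta)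
  also have "\<dots> = (\<Sum>i<length c. \<Sum>j<c!i. g i)"
    by (rule sum.Sigma[symmetric]) auto
  finally show ?thesis by simp
qed

definition Fs :: "nat list \<Rightarrow> real" where
  "Fs c = (\<Sum>i<length c. real (c!i) * (real (c!i) - 1))"

lemma Fs_upd: assumes "i < length c"
  shows "Fs (c[i := c!i + 1]) = Fs c + 2 * real (c!i)"
proof -
  have "Fs (c[i := c!i + 1]) = (\<Sum>j<length c. real (c!j) * (real (c!j) - 1) + (if j = i then 2 * real (c!i) else 0))"
    unfolding Fs_def by (intro sum.cong) (auto simp: nth_list_update algebra_simps)
  also have "\<dots> = Fs c + 2 * real (c!i)"
    using assms by (simp add: sum.distrib Fs_def)
  finally show ?thesis .
qed

lemma sumsq: "(\<Sum>i<length c. real (c!i) * real (c!i)) = Fs c + real (sum_list c)"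
  unfolding Fs_def by (simp add: sum_list_sum_nth atLeast0LessThan sum.distrib[symmetric] algebra_simps)

lemma step_exp: assumes "sum_list c > 0"
  shows "measure_pmf.expectation (polya_step c) Fs
     = Fs c * (real (sum_list c) + 2) / real (sum_list c) + 2"
proof -
  let ?T = "real (sum_list c)"
  have "measure_pmf.expectation (polya_step c) Fs
      = (\<Sum>b\<in>balls c. Fs (c[fst b := c ! fst b + 1])) / ?T"
    unfolding polya_step_def using assms finite_balls[of c] balls_ne[of c]
    by (simp add: integral_pmf_of_set card_balls)
  also have "(\<Sum>b\<in>balls c. Fs (c[fst b := c ! fst b + 1])) = (\<Sum>b\<in>balls c. Fs c + 2 * real (c ! fst b))"
    by (intro sum.cong refl) (auto simp: balls_def Fs_upd[simplified])
  also have "\<dots> = (\<Sum>i<length c. real (c!i) * (Fs c + 2 * real (c ! i)))"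
    by (rule balls_sum)
  also have "\<dots> = ?T * Fs c + 2 * (\<Sum>i<length c. real (c!i) * real (c!i))"
    by (simp add: algebra_simps sum.distrib sum_distrib_left sum_distrib_right sum_list_sum_nth atLeast0LessThan)
  also have "\<dots> = ?T * Fs c + 2 * (Fs c + ?T)" by (simp add: sumsq)
  finally have E: "measure_pmf.expectation (polya_step c) Fs = (?T * Fs c + 2 * (Fs c + ?T)) / ?T" .
  have "?T > 0" using assms by (simp only: of_nat_0_less_iff)
  then have "?T \<noteq> 0" by linarith
  then show ?thesis unfolding E by (simp add: field_simps)
qed


lemma set_step: assumes "sum_list c > 0"
  shows "set_pmf (polya_step c) = (\<lambda>b. c[fst b := c ! fst b + 1]) ` balls c"
  unfolding polya_step_def using assms finite_balls[of c] balls_ne[of c] by simp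

lemma urn_inv: assumes "M \<ge> 1"
  shows "finite (set_pmf (polya_urn M k)) \<and> (\<forall>c\<in>set_pmf (polya_urn M k). length c = M \<and> sum_list c = M + k)"
proof (induction k)
  case 0
  then show ?case by (simp add: sum_list_replicate)
next
  case (Suc k)
  have pos: "sum_list c > 0" if "c \<in> set_pmf (polya_urn M k)" for c
    using Suc that assms by auto
  have "finite (set_pmf (polya_step c))" if "c \<in> set_pmf (polya_urn M k)" for c
    using pos[OF that] by (simp add: set_step finite_balls)
  then have "finite (set_pmf (polya_urn M (Suc k)))"
    using Suc by auto
  moreover have "length c' = M \<and> sum_list c' = M + Suc k" if "c' \<in> set_pmf (polya_urn M (Suc k))" for c'
  proof -
    from that obtain c b where c: "c \<in> set_pmf (polya_urn M k)" and b: "b \<in> balls c"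
      and c': "c' = c[fst b := c ! fst b + 1]"
      by (auto simp: set_step pos)
    have "fst b < length c" using b by (auto simp: balls_def)
    then show ?thesis using Suc c c' by (simp add: sum_list_update)
  qed
  ultimately show ?case by blast
qed

lemma alg: fixes t m :: real assumes "t > 0" "m \<ge> 0"
  shows "(t + 2) / t * (2 * t * (t - m) / (m + 1)) + 2 = 2 * (t + 1) * (t + 1 - m) / (m + 1)"
proof -
  have "(t + 2) / t * (2 * t * (t - m) / (m + 1)) = (t * ((t + 2) * (2 * (t - m)))) / (t * (m + 1))"
    by (subst times_divide_times_eq) (simp add: ac_simps)
  also have "\<dots> = (t + 2) * (2 * (t - m)) / (m + 1)"
    using assms by (intro mult_divide_mult_cancel_left) simp
  finally have "(t + 2) / t * (2 * t * (t - m) / (m + 1)) = (t + 2) * (2 * (t - m)) / (m + 1)" .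
  moreover have m1: "m + 1 \<noteq> 0" using assms by simp
  moreover have "(t + 2) * (2 * (t - m)) / (m + 1) + 2 = ((t + 2) * (2 * (t - m)) + 2 * (m + 1)) / (m + 1)"
    using m1 by (simp add: add_divide_distrib field_simps)
  moreover have "(t + 2) * (2 * (t - m)) + 2 * (m + 1) = 2 * (t + 1) * (t + 1 - m)"
    by (simp add: algebra_simps)
  ultimately show ?thesis by simp
qed

lemma urn_exp: assumes "M \<ge> 1"
  shows "measure_pmf.expectation (polya_urn M k) Fs
      = 2 * real (M + k) * (real (M + k) - real M) / (real M + 1)"
proof (induction k)
  case 0
  then show ?case by (simp add: Fs_def)
next
  case (Suc k)
  let ?A = "set_pmf (polya_urn M k)"
  let ?T = "real (M + k)"
  have fin: "finite ?A" and inv: "\<And>c. c \<in> ?A \<Longrightarrow> length c = M \<and> sum_list c = M + k"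
    using urn_inv[OF assms, of k] by auto
  have Tpos: "?T > 0" using assms by simp
  have "measure_pmf.expectation (polya_urn M (Suc k)) Fs
      = (\<Sum>a\<in>?A. pmf (polya_urn M k) a * measure_pmf.expectation (polya_step a) Fs)"
    using fin inv assms
    by (simp only: polya_urn.simps, subst pmf_expectation_bind[of ?A]) (auto simp: set_step finite_balls)
  also have "\<dots> = (\<Sum>a\<in>?A. pmf (polya_urn M k) a * (Fs a * (?T + 2) / ?T + 2))"
    using inv assms by (intro sum.cong refl) (subst step_exp, auto)
  also have "\<dots> = (?T + 2) / ?T * (\<Sum>a\<in>?A. pmf (polya_urn M k) a * Fs a) + 2 * (\<Sum>a\<in>?A. pmf (polya_urn M k) a)"
  proof -
    have "(\<Sum>a\<in>?A. pmf (polya_urn M k) a * (Fs a * (?T + 2) / ?T + 2))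
       = (\<Sum>a\<in>?A. (?T + 2) / ?T * (pmf (polya_urn M k) a * Fs a) + 2 * pmf (polya_urn M k) a)"
      by (intro sum.cong refl) (simp add: algebra_simps)
    also have "\<dots> = (?T + 2) / ?T * (\<Sum>a\<in>?A. pmf (polya_urn M k) a * Fs a) + 2 * (\<Sum>a\<in>?A. pmf (polya_urn M k) a)"
      by (simp only: sum.distrib sum_distrib_left)
    finally show ?thesis .
  qed
  also have "(\<Sum>a\<in>?A. pmf (polya_urn M k) a) = 1"
    using fin by (rule sum_pmf_eq_1) simp
  also have "(\<Sum>a\<in>?A. pmf (polya_urn M k) a * Fs a) = measure_pmf.expectation (polya_urn M k) Fs"
    using fin by (subst integral_measure_pmf[of ?A]) auto
  also note Suc
  finally have "measure_pmf.expectation (polya_urn M (Suc k)) Fs =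
     (?T + 2) / ?T * (2 * ?T * (?T - real M) / (real M + 1)) + 2" by simp
  also have "\<dots> = 2 * (?T + 1) * (?T + 1 - real M) / (real M + 1)"
    using alg[OF Tpos, of "real M"] by simp
  finally show ?case by (simp add: algebra_simps)
qed




lemma card_same: assumes "b1 \<in> balls c"
  shows "card {b2 \<in> balls c. b2 \<noteq> b1 \<and> fst b2 = fst b1} = c ! fst b1 - 1"
proof -
  obtain i j where b1: "b1 = (i, j)" by force
  have ij: "i < length c" "j < c ! i" using assms b1 by (auto simp: balls_def)
  have "{b2 \<in> balls c. b2 \<noteq> b1 \<and> fst b2 = fst b1} = Pair i ` ({..<c!i} - {j})"
    using ij b1 by (auto simp: balls_def)
  moreover have "card (Pair i ` ({..<c!i} - {j})) = c ! i - 1"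
    using ij by (subst card_image) (auto simp: inj_on_def)
  ultimately show ?thesis using b1 by simp
qed

lemma draw_prob: assumes "sum_list c \<ge> 2"
  shows "measure_pmf.prob (map_pmf (\<lambda>(b1, b2). fst b1 = fst b2) (draw_two c)) {True}
     = Fs c / (real (sum_list c) * (real (sum_list c) - 1))"
proof -
  let ?B = "balls c"
  let ?S = "{(b1, b2). b1 \<in> ?B \<and> b2 \<in> ?B \<and> b1 \<noteq> b2}"
  let ?h = "\<lambda>(b1, b2). fst b1 = fst (b2::nat\<times>nat)"
  have S: "?S = Sigma ?B (\<lambda>b1. ?B - {b1})" by auto
  have finB: "finite ?B" by (rule finite_balls)
  have "card ?S = (\<Sum>b1\<in>?B. card (?B - {b1}))"
    unfolding S using finB by (intro card_SigmaI) auto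
  also have "\<dots> = (\<Sum>b1\<in>?B. sum_list c - 1)"
    using finB by (intro sum.cong refl) (simp add: card_balls)
  finally have cS: "card ?S = sum_list c * (sum_list c - 1)" by (simp add: card_balls)
  have rcS: "real (card ?S) = real (sum_list c) * (real (sum_list c) - 1)"
    using assms by (simp add: cS of_nat_diff)
  have finS: "finite ?S" unfolding S using finB by (intro finite_SigmaI) auto
  have gen: "\<And>x::nat. 2 \<le> x \<Longrightarrow> 2 * 1 \<le> x * (x - 1)" by (rule mult_le_mono) auto
  have gen2: "\<And>y::nat. 2 * 1 \<le> y \<Longrightarrow> y \<noteq> 0" by auto
  have "2 * 1 \<le> sum_list c * (sum_list c - 1)" by (rule gen[OF assms])
  then have "card ?S \<noteq> 0" unfolding cS by (rule gen2)
  then have neS: "?S \<noteq> {}" by (metis card.empty)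
  have I: "?S \<inter> ?h -` {True} = Sigma ?B (\<lambda>b1. {b2 \<in> ?B. b2 \<noteq> b1 \<and> fst b2 = fst b1})"
    by (rule set_eqI) (auto simp: case_prod_beta)
  have "real (card (?S \<inter> ?h -` {True})) = (\<Sum>b1\<in>?B. real (card {b2 \<in> ?B. b2 \<noteq> b1 \<and> fst b2 = fst b1}))"
    unfolding I using finB by (subst card_SigmaI) auto
  also have "\<dots> = (\<Sum>b1\<in>?B. real (c ! fst b1 - 1))"
    by (intro sum.cong refl) (simp add: card_same)
  also have "\<dots> = (\<Sum>i<length c. real (c ! i) * real (c ! i - 1))"
    by (rule balls_sum)
  also have "\<dots> = Fs c"
    unfolding Fs_def by (intro sum.cong refl) (auto simp: of_nat_diff)
  finally have cI: "real (card (?S \<inter> ?h -` {True})) = Fs c" .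
  have "measure_pmf.prob (map_pmf ?h (draw_two c)) {True} = measure_pmf.prob (draw_two c) (?h -` {True})"
    by simp
  also have "\<dots> = real (card (?S \<inter> ?h -` {True})) / real (card ?S)"
    unfolding draw_two_def by (rule measure_pmf_of_set[OF neS finS])
  finally show ?thesis using cI rcS by simp
qed


lemma final_ineq: fixes n m :: real assumes "m \<ge> 1" "n \<ge> m" "n \<ge> 2"
  shows "2 * n * (n - m) / (m + 1) / (n * (n - 1)) \<le> 2 / (m + 1)"
proof -
  have "2 * n * (n - m) / (m + 1) / (n * (n - 1)) = (n * (2 * (n - m))) / (n * ((m + 1) * (n - 1)))"
    by (simp add: ac_simps)
  also have "\<dots> = (2 * (n - m)) / ((m + 1) * (n - 1))"
    using assms by (intro mult_divide_mult_cancel_left) simp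
  also have "\<dots> \<le> (2 * (n - 1)) / ((m + 1) * (n - 1))"
    using assms by (intro divide_right_mono) auto
  also have "\<dots> = ((n - 1) * 2) / ((n - 1) * (m + 1))"
    by (simp add: ac_simps)
  also have "\<dots> = 2 / (m + 1)"
    using assms by (intro mult_divide_mult_cancel_left) simp
  finally show ?thesis .
qed

theorem lemma5p1:
  fixes M N :: nat
  assumes "N \<ge> M" and "N \<ge> 2"
  shows "same_colour_prob M N \<le> 2 / (real M + 1)"
proof (cases "M = 0")
  case True
  have "same_colour_prob M N \<le> 1" unfolding same_colour_prob_def by simp
  then show ?thesis using True by simp
next
  case False
  then have M1: "M \<ge> 1" by simp
  let ?P = "polya_urn M (N - M)"
  let ?A = "set_pmf ?P"
  let ?h = "\<lambda>(b1, b2). fst b1 = fst (b2::nat\<times>nat)"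
  let ?f = "\<lambda>c. map_pmf ?h (draw_two c)"
  let ?i = "indicator {True} :: bool \<Rightarrow> real"
  have fin: "finite ?A" and inv: "\<And>c. c \<in> ?A \<Longrightarrow> length c = M \<and> sum_list c = M + (N - M)"
    using urn_inv[OF M1, of "N - M"] by auto
  have NM: "M + (N - M) = N" using assms by simp
  have "same_colour_prob M N = measure_pmf.expectation (bind_pmf ?P ?f) ?i"
    unfolding same_colour_prob_def by simp
  also have "\<dots> = (\<Sum>a\<in>?A. pmf ?P a * measure_pmf.expectation (?f a) ?i)"
    using fin by (subst pmf_expectation_bind[of ?A]) auto
  also have "\<dots> = (\<Sum>a\<in>?A. pmf ?P a * (Fs a / (real N * (real N - 1))))"
  proof (intro sum.cong refl)
    fix a assume a: "a \<in> ?A"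
    have "sum_list a = N" using inv[OF a] NM by simp
    then have "measure_pmf.expectation (?f a) ?i = Fs a / (real N * (real N - 1))"
      using draw_prob[of a] assms by simp
    then show "pmf ?P a * measure_pmf.expectation (?f a) ?i = pmf ?P a * (Fs a / (real N * (real N - 1)))"
      by simp
  qed
  also have "\<dots> = (\<Sum>a\<in>?A. pmf ?P a * Fs a) / (real N * (real N - 1))"
    by (simp add: sum_divide_distrib)
  also have "(\<Sum>a\<in>?A. pmf ?P a * Fs a) = measure_pmf.expectation ?P Fs"
    using fin by (subst integral_measure_pmf[of ?A]) auto
  also have "\<dots> = 2 * real N * (real N - real M) / (real M + 1)"
    using urn_exp[OF M1, of "N - M"] NM by simp
  also have "2 * real N * (real N - real M) / (real M + 1) / (real N * (real N - 1)) \<le> 2 / (real M + 1)"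
    using assms M1 by (intro final_ineq) auto
  finally show ?thesis .
qed

end
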